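(* There is an absolute constant $c>0$ such that the following holds. Let $t,n,k\ge1$ and $d\ge0$ be integers with $(d+1)\mid t$ and $k(d+1)\ge 4$. Then every $d$-runlength constrained $k$-disjunct binary $t\times n$ matrix satisfies $$t\ge\min\left(n,\;c\,\frac{k(d+1)\log n}{\log(k(d+1))}\right).$$ (In the paper's notation: $t\ge\min\big(n,\Omega\big(\tfrac{k d\log n}{\log(kd)}\big)\big)$.)
   Context: $\log$ denotes the base-2 logarithm. A binary $t\times n$ matrix $M$ is $d$-runlength constrained if in every column, any two $1$'s are separated by a run of at least $d$ zeros, i.e. $M_{ij}=M_{i'j}=1$ with $i<i'$ implies $i'-i\ge d+1$. A binary matrix $M$ is $k$-disjunct if for every column $j$ and every set $S$ of at most $k$ columns with $j\notin S$, $\mathsf{supp}(M_{\cdot j})\not\subseteq\bigcup_{j'\in S}\mathsf{supp}(M_{\cdot j'})$, where $\mathsf{supp}$ denotes the support. *)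

theory Defs
  imports Complex_Main
begin

text \<open>A binary t x n matrix is represented as M :: nat \<Rightarrow> nat \<Rightarrow> bool,
  with rows i < t and columns j < n; M i j = True means entry 1.
  Only entries with i < t, j < n are relevant.\<close>

definition col_supp :: "(nat \<Rightarrow> nat \<Rightarrow> bool) \<Rightarrow> nat \<Rightarrow> nat \<Rightarrow> nat set" where
  "col_supp M t j = {i. i < t \<and> M i j}"

definition runlength_constrained ::
  "nat \<Rightarrow> (nat \<Rightarrow> nat \<Rightarrow> bool) \<Rightarrow> nat \<Rightarrow> nat \<Rightarrow> bool" where
  "runlength_constrained d M t n \<longleftrightarrow>
     (\<forall>j<n. \<forall>i<t. \<forall>i'<t. M i j \<and> M i' j \<and> i < i' \<longrightarrow> i' - i \<ge> d + 1)"

definition disjunct :: "nat \<Rightarrow> (nat \<Rightarrow> nat \<Rightarrow> bool) \<Rightarrow> nat \<Rightarrow> nat \<Rightarrow> bool" where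
  "disjunct k M t n \<longleftrightarrow>
     (\<forall>j<n. \<forall>S. S \<subseteq> {..<n} \<and> card S \<le> k \<and> j \<notin> S \<longrightarrow>
        \<not> (col_supp M t j \<subseteq> (\<Union>j'\<in>S. col_supp M t j')))"

end

theory Submission
  imports Defs
begin

lemma fin_supp: "finite (col_supp M t j)"
  unfolding col_supp_def by simp

lemma supp_card:
  assumes rl: "runlength_constrained d M t n" and j: "j < n" and dv: "(d+1) dvd t"
  shows "card (col_supp M t j) \<le> t div (d+1)"
proof -
  have key: "a div (d+1) \<noteq> b div (d+1)" if a: "a \<in> col_supp M t j" and b: "b \<in> col_supp M t j"
    and ab: "a < b" for a b
  proof -
    from a b ab j rl have "b - a \<ge> d+1" unfolding runlength_constrained_def col_supp_def by blast
    then have "b \<ge> a + (d+1)" by linarith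
    then have "b div (d+1) \<ge> (a + (d+1)) div (d+1)" by (rule div_le_mono)
    moreover have "(a + (d+1)) div (d+1) = a div (d+1) + 1" by (rule div_add_self2) simp
    ultimately show ?thesis by linarith
  qed
  have inj: "inj_on (\<lambda>i. i div (d+1)) (col_supp M t j)"
  proof (rule inj_onI)
    fix a b assume a: "a \<in> col_supp M t j" and b: "b \<in> col_supp M t j"
      and e: "a div (d+1) = b div (d+1)"
    show "a = b"
    proof (rule ccontr)
      assume "a \<noteq> b"
      then consider "a < b" | "b < a" by linarith
      then show False
      proof cases
        case 1 then show False using key[OF a b] e by simp
      next
        case 2 then show False using key[OF b a] e by simp
      qed
    qed
  qed
  from dv obtain q where tq0: "t = (d+1) * q" by blast
  have tq: "t = q * (d+1)" using tq0 by simp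
  have sub: "(\<lambda>i. i div (d+1)) ` col_supp M t j \<subseteq> {..< t div (d+1)}"
  proof
    fix x assume "x \<in> (\<lambda>i. i div (d+1)) ` col_supp M t j"
    then obtain i where i: "i < t" "x = i div (d+1)" unfolding col_supp_def by auto
    have "i < q * (d+1)" using i tq by simp
    then have "x < q" using i(2) less_mult_imp_div_less by blast
    moreover have "t div (d+1) = q" unfolding tq by (rule nonzero_mult_div_cancel_right) simp
    ultimately show "x \<in> {..< t div (d+1)}" by simp
  qed
  have "card (col_supp M t j) = card ((\<lambda>i. i div (d+1)) ` col_supp M t j)"
    using card_image[OF inj] by simp
  also have "\<dots> \<le> card {..< t div (d+1)}" by (rule card_mono[OF _ sub]) simp
  finally show ?thesis by simp
qed

lemma cover:
  assumes H: "\<forall>B. B \<subseteq> col_supp M t j \<and> card B \<le> r \<longrightarrow> (\<exists>j'<n. j' \<noteq> j \<and> B \<subseteq> col_supp M t j')"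
  shows "A \<subseteq> col_supp M t j \<Longrightarrow> card A \<le> m*r \<Longrightarrow>
    \<exists>S. S \<subseteq> {..<n} \<and> card S \<le> m \<and> j \<notin> S \<and> A \<subseteq> (\<Union>j'\<in>S. col_supp M t j')"
proof (induction m arbitrary: A)
  case 0
  have "finite A" using 0 fin_supp finite_subset by blast
  then have "A = {}" using 0 by simp
  then show ?case by (intro exI[of _ "{}"]) simp
next
  case (Suc m)
  have fin: "finite A" using Suc.prems(1) fin_supp finite_subset by blast
  show ?case
  proof (cases "card A \<le> r")
    case True
    have "\<exists>j'<n. j' \<noteq> j \<and> A \<subseteq> col_supp M t j'" using H[rule_format, of A] Suc.prems(1) True by blast
    then obtain j' where jj: "j'<n" "j'\<noteq>j" "A \<subseteq> col_supp M t j'" by blast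
    have "{j'} \<subseteq> {..<n}" "card {j'} \<le> Suc m" "j \<notin> {j'}" "A \<subseteq> (\<Union>j''\<in>{j'}. col_supp M t j'')"
      using jj by auto
    then show ?thesis by blast
  next
    case False
    then have "r \<le> card A" by simp
    then obtain B where B: "B \<subseteq> A" "card B = r" "finite B"
      by (rule obtain_subset_with_card_n)
    have "B \<subseteq> col_supp M t j" using B(1) Suc.prems(1) by blast
    then have "\<exists>j'<n. j' \<noteq> j \<and> B \<subseteq> col_supp M t j'" using H[rule_format, of B] B(2) by blast
    then obtain j' where j': "j'<n" "j'\<noteq>j" "B \<subseteq> col_supp M t j'" by blast
    have "card (A - B) = card A - r" using card_Diff_subset[OF B(3) B(1)] B by simp
    then have c2: "card (A - B) \<le> m*r" using Suc.prems(2) by simp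
    have c1: "A - B \<subseteq> col_supp M t j" using Suc.prems(1) by blast
    from Suc.IH[OF c1 c2] obtain S where S: "S \<subseteq> {..<n}" "card S \<le> m" "j \<notin> S"
      "A - B \<subseteq> (\<Union>j'\<in>S. col_supp M t j')" by blast
    have "finite S" by (rule finite_subset[OF S(1)]) simp
    then have "card (insert j' S) \<le> Suc m" using S(2) by (simp add: card_insert_if)
    moreover have "insert j' S \<subseteq> {..<n}" using S(1) j'(1) by auto
    moreover have "j \<notin> insert j' S" using S(3) j'(2) by auto
    moreover have "A \<subseteq> (\<Union>j''\<in>insert j' S. col_supp M t j'')"
    proof
      fix x assume x: "x \<in> A"
      show "x \<in> (\<Union>j''\<in>insert j' S. col_supp M t j'')"
      proof (cases "x \<in> B")
        case True then show ?thesis using j'(3) by blast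
      next
        case False then have "x \<in> A - B" using x by blast
        then show ?thesis using S(4) by blast
      qed
    qed
    ultimately show ?thesis by blast
  qed
qed

lemma priv_sub:
  assumes dis: "disjunct k M t n" and j: "j < n" and c: "card (col_supp M t j) \<le> k*r"
  shows "\<exists>P. P \<subseteq> col_supp M t j \<and> card P \<le> r \<and> (\<forall>j'<n. j' \<noteq> j \<longrightarrow> \<not> P \<subseteq> col_supp M t j')"
proof (rule ccontr)
  assume "\<not> ?thesis"
  then have H: "\<forall>B. B \<subseteq> col_supp M t j \<and> card B \<le> r \<longrightarrow> (\<exists>j'<n. j' \<noteq> j \<and> B \<subseteq> col_supp M t j')"
    by blast
  from cover[OF H, of "col_supp M t j" k] c obtain S where S:
    "S \<subseteq> {..<n}" "card S \<le> k" "j \<notin> S" "col_supp M t j \<subseteq> (\<Union>j'\<in>S. col_supp M t j')"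
    by (auto simp: mult.commute)
  have "\<not> (col_supp M t j \<subseteq> (\<Union>j'\<in>S. col_supp M t j'))"
    using dis[unfolded disjunct_def, rule_format, OF j, of S] S(1,2,3) by blast
  then show False using S(4) by blast
qed

lemma count_bound:
  fixes t r :: nat assumes r1: "1 \<le> r" and rt: "r \<le> t"
  shows "real (card {P. P \<subseteq> {..<t} \<and> card P \<le> r}) \<le> exp r * (t/r)^r"
proof -
  let ?G = "\<lambda>i. {P. P \<subseteq> {..<t} \<and> card P = i}"
  have "card {P. P \<subseteq> {..<t} \<and> card P \<le> r} \<le> card (\<Union>i\<in>{..r}. ?G i)"
    by (intro card_mono) auto
  also have "\<dots> \<le> (\<Sum>i\<le>r. card (?G i))" by (rule card_UN_le) simp
  also have "\<dots> = (\<Sum>i\<le>r. t choose i)" using n_subsets[of "{..<t}"] by simp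
  finally have c1: "real (card {P. P \<subseteq> {..<t} \<and> card P \<le> r}) \<le> (\<Sum>i\<le>r. real (t choose i))"
    by (metis of_nat_le_iff of_nat_sum)
  define x where "x = real r / real t"
  have x: "0 < x" "x \<le> 1" using r1 rt unfolding x_def by auto
  have "x^r * (\<Sum>i\<le>r. real (t choose i)) = (\<Sum>i\<le>r. real (t choose i) * x^r)"
    by (simp add: sum_distrib_left mult.commute)
  also have "\<dots> \<le> (\<Sum>i\<le>r. real (t choose i) * x^i)"
    using x by (intro sum_mono mult_left_mono power_decreasing) auto
  also have "\<dots> \<le> (\<Sum>i\<le>t. real (t choose i) * x^i)"
    using rt x by (intro sum_mono2) auto
  also have "\<dots> = (x + 1)^t" by (simp add: binomial_ring)
  also have "\<dots> \<le> exp x ^ t" using x by (intro power_mono) (auto simp: add.commute)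
  also have "\<dots> = exp r" using exp_of_nat_mult[of t x] rt r1 unfolding x_def by simp
  finally have "x^r * (\<Sum>i\<le>r. real (t choose i)) \<le> exp r" .
  then have "(\<Sum>i\<le>r. real (t choose i)) \<le> exp r / x^r" using x
    by (simp add: field_simps)
  also have "\<dots> = exp r * (t/r)^r" unfolding x_def by (simp add: power_divide)
  finally show ?thesis using c1 by linarith
qed


lemma main_bound:
  fixes t n k d :: nat and M :: "nat \<Rightarrow> nat \<Rightarrow> bool"
  assumes t1: "t \<ge> 1" and n1: "n \<ge> 1" and k1: "k \<ge> 1" and dv: "(d + 1) dvd t"
    and K4: "k * (d + 1) \<ge> 4" and rl: "runlength_constrained d M t n" and dis: "disjunct k M t n"
  shows "real t \<ge> min (real n)
          ((1/4) * real (k * (d + 1)) * log 2 (real n) / log 2 (real (k * (d + 1))))"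
proof (cases "n \<le> t")
  case True then show ?thesis by simp
next
  case False
  then have ntl: "t < n" by simp
  define q where "q = t div (d+1)"
  define r where "r = (q + k - 1) div k"
  from dv obtain q' where tq0: "t = (d+1) * q'" by blast
  have "q = q'" unfolding q_def tq0 by (rule nonzero_mult_div_cancel_left) simp
  then have tq: "t = q * (d+1)" using tq0 by simp
  have q1: "q \<ge> 1" using t1 tq by (cases q) auto
  have dm: "k * r + (q + k - 1) mod k = q + k - 1" unfolding r_def
    by (metis div_mult_mod_eq mult.commute)
  have mk: "(q + k - 1) mod k < k" using k1 by simp
  have qkr: "q \<le> k * r" using dm mk by linarith
  have kr: "k * r \<le> q + k - 1" using dm by linarith
  have n2: "n \<ge> 2" using ntl t1 by linarith
  have P: "\<exists>P. P \<subseteq> col_supp M t j \<and> card P \<le> r \<and> (\<forall>j'<n. j' \<noteq> j \<longrightarrow> \<not> P \<subseteq> col_supp M t j')"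
    if j: "j < n" for j
  proof -
    have "card (col_supp M t j) \<le> q" unfolding q_def by (rule supp_card[OF rl j dv])
    then have "card (col_supp M t j) \<le> k * r" using qkr by linarith
    then show ?thesis by (rule priv_sub[OF dis j])
  qed
  define f where "f j = (SOME P. P \<subseteq> col_supp M t j \<and> card P \<le> r \<and> (\<forall>j'<n. j' \<noteq> j \<longrightarrow> \<not> P \<subseteq> col_supp M t j'))" for j
  have fP: "f j \<subseteq> col_supp M t j \<and> card (f j) \<le> r \<and> (\<forall>j'<n. j' \<noteq> j \<longrightarrow> \<not> f j \<subseteq> col_supp M t j')"
    if "j < n" for j
    unfolding f_def using someI_ex[OF P[OF that]] .
  have inj: "inj_on f {..<n}"
  proof (rule inj_onI)
    fix a b assume a: "a \<in> {..<n}" and b: "b \<in> {..<n}" and e: "f a = f b"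
    show "a = b"
    proof (rule ccontr)
      assume ab: "a \<noteq> b"
      have "f b \<subseteq> col_supp M t b" using fP b by auto
      then have "f a \<subseteq> col_supp M t b" using e by simp
      then show False using fP[of a] a b ab by auto
    qed
  qed
  have cn: "card (f ` {..<n}) = n" using card_image[OF inj] by simp
  have fsub: "f j \<subseteq> {..<t}" if "j < n" for j
    using fP[OF that] unfolding col_supp_def by auto
  show ?thesis
  proof (cases "q \<le> k")
    case True
    then have "k * r < k * 2" using kr k1 by linarith
    then have r1: "r \<le> 1" by simp
    have "f ` {..<n} \<subseteq> (\<lambda>i. {i}) ` {..<t}"
    proof
      fix X assume "X \<in> f ` {..<n}"
      then obtain j where j: "j < n" "X = f j" by auto
      define j' where "j' = (if j = 0 then 1 else (0::nat))"
      have j': "j' < n" "j' \<noteq> j" unfolding j'_def using n2 by auto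
      have "X \<noteq> {}" using fP[OF j(1)] j' j(2) by auto
      moreover have "card X \<le> 1" using fP[OF j(1)] j(2) r1 by auto
      moreover have "finite X" using fsub[OF j(1)] j(2) finite_subset by blast
      ultimately obtain i where "X = {i}" by (metis card_1_singletonE card_0_eq le_Suc_eq One_nat_def le_zero_eq)
      then show "X \<in> (\<lambda>i. {i}) ` {..<t}" using fsub[OF j(1)] j(2) by auto
    qed
    then have "card (f ` {..<n}) \<le> card ((\<lambda>i. {i}) ` {..<t})" by (rule card_mono[rotated]) simp
    also have "\<dots> \<le> t" using card_image_le[of "{..<t}" "\<lambda>i. {i}"] by simp
    finally show ?thesis using cn ntl by simp
  next
    case False
    then have qk: "k < q" by simp
    have "k * 1 < k * r" using qkr qk by linarith
    then have r2: "r \<ge> 2" by simp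
    have rq: "r \<le> q"
    proof (rule ccontr)
      assume "\<not> r \<le> q"
      then have "q + 1 \<le> r" by simp
      then have "k * (q+1) \<le> k * r" by (rule mult_left_mono) simp
      moreover have "q \<le> k * q" using k1 by simp
      moreover have "k * (q+1) = k * q + k" by simp
      ultimately show False using kr k1 by linarith
    qed
    have "q \<le> t" using tq by simp
    then have rt: "r \<le> t" using rq by linarith
    have "f ` {..<n} \<subseteq> {P. P \<subseteq> {..<t} \<and> card P \<le> r}" using fsub fP by auto
    then have "card (f ` {..<n}) \<le> card {P. P \<subseteq> {..<t} \<and> card P \<le> r}"
      by (rule card_mono[rotated]) simp
    then have "real n \<le> real (card {P. P \<subseteq> {..<t} \<and> card P \<le> r})" using cn by simp
    also have "\<dots> \<le> exp r * (t/r)^r" using count_bound[of r t] r2 rt by simp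
    finally have nb: "real n \<le> exp r * (t/r)^r" .
    define K where "K = real (k * (d+1))"
    have K4': "K \<ge> 4" unfolding K_def using K4 by (metis of_nat_le_iff of_nat_numeral)
    have "q * (d+1) \<le> (k * r) * (d+1)" using qkr by (rule mult_right_mono) simp
    then have "real t \<le> K * real r" unfolding K_def tq by (simp add: algebra_simps flip: of_nat_mult)
    then have tr: "real t / real r \<le> K" using r2 by (simp add: divide_le_eq)
    have "(real t / real r)^r \<le> K^r" using tr by (intro power_mono) auto
    then have nb2: "real n \<le> exp r * K^r" using nb by (smt (verit) exp_gt_zero mult_left_mono)
    have Kp: "K > 0" using K4' by simp
    have "ln (real n) \<le> ln (exp r * K^r)" using nb2 n2 Kp by (subst ln_le_cancel_iff) auto
    also have "\<dots> = r + r * ln K" using Kp by (simp add: ln_mult ln_realpow)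
    finally have lnn: "ln (real n) \<le> r + r * ln K" .
    have "exp 1 \<le> K" using exp_le K4' by simp
    then have "ln (exp 1) \<le> ln K" using Kp by (subst ln_le_cancel_iff) auto
    then have lnK: "ln K \<ge> 1" by simp
    have "k*r \<le> 2*q" using kr qk by linarith
    then have "(k*r)*(d+1) \<le> (2*q)*(d+1)" by (rule mult_right_mono) simp
    then have "real ((k*r)*(d+1)) \<le> real ((2*q)*(d+1))" by (simp only: of_nat_le_iff)
    then have rK: "real r * K \<le> 2 * real t" unfolding K_def tq by (simp add: algebra_simps)
    have "K * ln (real n) \<le> K * (r + r * ln K)" using lnn Kp by (intro mult_left_mono) auto
    also have "\<dots> = (real r * K) * (1 + ln K)" by (simp add: algebra_simps)
    also have "\<dots> \<le> (2 * real t) * (1 + ln K)" using rK lnK by (intro mult_right_mono) auto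
    also have "\<dots> \<le> (2 * real t) * (2 * ln K)" using lnK by (intro mult_left_mono) auto
    finally have fin: "K * ln (real n) \<le> 4 * real t * ln K" by simp
    have "(1/4) * K * log 2 (real n) / log 2 K = (K * ln (real n)) / (4 * ln K)"
      by (simp add: log_def field_simps)
    also have "\<dots> \<le> real t" using fin lnK by (simp add: divide_le_eq)
    finally have "(1/4) * K * log 2 (real n) / log 2 K \<le> real t" .
    then show ?thesis unfolding K_def by simp
  qed
qed

theorem theorem3:
  "\<exists>c::real. c > 0 \<and>
     (\<forall>t n k d :: nat. \<forall>M :: nat \<Rightarrow> nat \<Rightarrow> bool.
        t \<ge> 1 \<longrightarrow> n \<ge> 1 \<longrightarrow> k \<ge> 1 \<longrightarrow>
        (d + 1) dvd t \<longrightarrow> k * (d + 1) \<ge> 4 \<longrightarrow>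
        runlength_constrained d M t n \<longrightarrow> disjunct k M t n \<longrightarrow>
        real t \<ge> min (real n)
          (c * real (k * (d + 1)) * log 2 (real n) / log 2 (real (k * (d + 1)))))"
  by (rule exI[of _ "1/4"]) (use main_bound in auto)

end
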